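(* Let $\theta$ be an irrational number whose best rational approximants $(p_n/q_n)_{n\ge0}$ satisfy $q_n^{-1}\log q_{n+1}\to\infty$ as $n\to\infty$. For any sequence of positive numbers $(\varepsilon_p)_{p\ge1}$ converging to $0$, there exist a subsequence $(q'_n)_{n\ge0}$ of $(q_n)_{n\ge0}$ and a strictly increasing sequence of positive integers $(N_p)_{p\ge1}$ such that for every $p\ge1$, \[|1-e^{2\pi i N_p\theta}|+\sum_{n\ge0}|1-e^{2\pi i q'_nN_p\theta}|\,p^{q'_n}\le\varepsilon_p.\]
   Context: Best rational approximants $p_n/q_n$ of an irrational $\theta$ are its continued fraction convergents, with $\gcd(p_n,q_n)=1$, $q_n\ge0$. A subsequence $q'$ of $(q_n)$ means $q'_n=q_{k_n}$ with $k_n$ strictly increasing. *)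

theory Defs
  imports "HOL-Analysis.Analysis"
begin

fun cf_rem :: "real \<Rightarrow> nat \<Rightarrow> real" where
  "cf_rem x 0 = x"
| "cf_rem x (Suc n) = 1 / frac (cf_rem x n)"

definition cf_a :: "real \<Rightarrow> nat \<Rightarrow> int" where
  "cf_a x n = \<lfloor>cf_rem x n\<rfloor>"

text \<open>Denominators of the convergents p_n/q_n:
  q_0 = 1, q_1 = a_1, q_(n+2) = a_(n+2) q_(n+1) + q_n  (i.e. q_(-1) = 0).\<close>

fun cf_q :: "real \<Rightarrow> nat \<Rightarrow> int" where
  "cf_q x 0 = 1"
| "cf_q x (Suc 0) = cf_a x 1"
| "cf_q x (Suc (Suc n)) = cf_a x (n + 2) * cf_q x (Suc n) + cf_q x n"

end

theory Submission
  imports Defs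
begin

lemma norm_1_minus_exp_i: "cmod (1 - exp (\<i> * complex_of_real y)) \<le> \<bar>y\<bar>"
proof -
  have e: "exp (\<i> * complex_of_real y) = Complex (cos y) (sin y)"
    by (simp add: exp_Euler cos_of_real sin_of_real complex_eq_iff)
  have "(cmod (1 - exp (\<i> * complex_of_real y)))^2 = (1 - cos y)^2 + (sin y)^2"
    unfolding e by (simp add: cmod_power2)
  also have "\<dots> = 2 - 2 * cos y" using sin_cos_squared_add[of y] by (simp add: power2_eq_square algebra_simps)
  also have "\<dots> = 4 * (sin (y/2))^2" using cos_double_sin[of "y/2"] by simp
  also have "\<dots> = (2 * \<bar>sin (y/2)\<bar>)^2" by (simp add: power2_eq_square)
  also have "\<dots> \<le> \<bar>y\<bar>^2"
    using abs_sin_x_le_abs_x[of "y/2"] by (intro power_mono) auto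
  finally have "(cmod (1 - exp (\<i> * complex_of_real y)))^2 \<le> \<bar>y\<bar>^2" .
  then show ?thesis using power2_le_imp_le abs_ge_zero by blast
qed

lemma norm_1_minus_exp_2pi: "cmod (1 - exp (2 * pi * \<i> * complex_of_real x)) \<le> 2 * pi * \<bar>x - of_int m\<bar>"
proof -
  have "exp (2 * pi * \<i> * complex_of_real x) = exp (\<i> * complex_of_real (2*pi*(x - of_int m))) * exp (2 * pi * \<i> * of_int m)"
  proof -
    have "2 * pi * \<i> * complex_of_real x = \<i> * complex_of_real (2*pi*(x - of_int m)) + 2 * pi * \<i> * of_int m"
      by (simp add: field_simps)
    then show ?thesis by (simp only: exp_add)
  qed
  also have "exp (2 * pi * \<i> * of_int m) = 1"
  proof -
    have "exp (2 * pi * \<i> * of_int m) = exp ((2 * (of_int m :: complex) * pi) * \<i>)"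
      by (rule arg_cong[where f=exp]) (simp add: algebra_simps)
    also have "\<dots> = 1" using exp_integer_2pi[of "of_int m"] by simp
    finally show ?thesis .
  qed
  finally have "cmod (1 - exp (2 * pi * \<i> * complex_of_real x)) = cmod (1 - exp (\<i> * complex_of_real (2*pi*(x - of_int m))))" by simp
  also have "\<dots> \<le> \<bar>2*pi*(x - of_int m)\<bar>" by (rule norm_1_minus_exp_i)
  finally show ?thesis by (simp only: abs_mult abs_of_nonneg[of "2*pi"] pi_ge_zero) simp
qed

lemma frac_pos_irr: "(x::real) \<notin> \<rat> \<Longrightarrow> 0 < frac x"
proof -
  assume "x \<notin> \<rat>"
  then have "x \<notin> \<int>" using Ints_subset_Rats by blast
  then have "frac x \<noteq> 0" by (simp add: frac_eq_0_iff)
  then show ?thesis using frac_ge_0[of x] by linarith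
qed

lemma cf_rem_irr: "\<theta> \<notin> \<rat> \<Longrightarrow> cf_rem \<theta> n \<notin> \<rat>"
proof (induction n)
  case 0 then show ?case by simp
next
  case (Suc n)
  show ?case
  proof
    assume "cf_rem \<theta> (Suc n) \<in> \<rat>"
    then have "1 / frac (cf_rem \<theta> n) \<in> \<rat>" by simp
    then have "frac (cf_rem \<theta> n) \<in> \<rat>"
      by (metis Rats_inverse inverse_eq_divide inverse_inverse_eq)
    then have "cf_rem \<theta> n \<in> \<rat>"
      by (metis Rats_add Rats_of_int frac_def diff_add_cancel)
    then show False using Suc by simp
  qed
qed

lemma xi_pos: "\<theta> \<notin> \<rat> \<Longrightarrow> 0 < frac (cf_rem \<theta> n)"
  using frac_pos_irr cf_rem_irr by blast

lemma cf_a_ge1: "\<theta> \<notin> \<rat> \<Longrightarrow> cf_a \<theta> (Suc n) \<ge> 1"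
proof -
  assume irr: "\<theta> \<notin> \<rat>"
  have "0 < frac (cf_rem \<theta> n)" "frac (cf_rem \<theta> n) < 1" using xi_pos[OF irr] frac_lt_1 by auto
  then have "cf_rem \<theta> (Suc n) > 1" by (simp add: less_divide_eq)
  then show ?thesis unfolding cf_a_def by (simp add: one_le_floor)
qed

lemma cf_q_mono_aux: "\<theta> \<notin> \<rat> \<Longrightarrow> cf_q \<theta> n \<ge> 1 \<and> cf_q \<theta> n \<le> cf_q \<theta> (Suc n) \<and> (n \<ge> 1 \<longrightarrow> cf_q \<theta> n < cf_q \<theta> (Suc n))"
proof (induction n)
  case 0
  then show ?case using cf_a_ge1[of \<theta> 0] by simp
next
  case (Suc n)
  have a: "cf_a \<theta> (Suc (Suc n)) \<ge> 1" using cf_a_ge1[OF Suc.prems, of "Suc n"] by simp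
  have IH: "cf_q \<theta> n \<ge> 1" "cf_q \<theta> n \<le> cf_q \<theta> (Suc n)" using Suc.IH[OF Suc.prems] by auto
  have "cf_a \<theta> (Suc (Suc n)) * cf_q \<theta> (Suc n) \<ge> cf_q \<theta> (Suc n)"
    using a IH by (simp add: mult_le_cancel_right1)
  moreover have e: "cf_q \<theta> (Suc (Suc n)) = cf_a \<theta> (Suc (Suc n)) * cf_q \<theta> (Suc n) + cf_q \<theta> n" by simp
  ultimately have "cf_q \<theta> (Suc n) \<ge> 1" "cf_q \<theta> (Suc n) < cf_q \<theta> (Suc (Suc n))" using IH by linarith+
  then show ?case by simp
qed

fun cf_p :: "real \<Rightarrow> nat \<Rightarrow> int" where
  "cf_p x 0 = cf_a x 0"
| "cf_p x (Suc 0) = cf_a x 1 * cf_a x 0 + 1"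
| "cf_p x (Suc (Suc n)) = cf_a x (n + 2) * cf_p x (Suc n) + cf_p x n"

definition cfD :: "real \<Rightarrow> nat \<Rightarrow> real" where
  "cfD x n = of_int (cf_q x n) * x - of_int (cf_p x n)"

lemma cfD_rec: "cfD x (Suc (Suc n)) = of_int (cf_a x (n+2)) * cfD x (Suc n) + cfD x n"
  by (simp add: cfD_def algebra_simps)

lemma cfD_step: assumes irr: "\<theta> \<notin> \<rat>"
  shows "cfD \<theta> (Suc n) = - frac (cf_rem \<theta> (Suc n)) * cfD \<theta> n"
proof (induction n)
  case 0
  define \<xi> where "\<xi> = frac \<theta>"
  have xp: "\<xi> > 0" using xi_pos[OF irr, of 0] by (simp add: \<xi>_def)
  have D0: "cfD \<theta> 0 = \<xi>" by (simp add: cfD_def \<xi>_def cf_a_def frac_def)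
  have D1: "cfD \<theta> 1 = of_int (cf_a \<theta> 1) * \<xi> - 1"
    by (simp add: cfD_def \<xi>_def cf_a_def frac_def algebra_simps)
  have "frac (cf_rem \<theta> 1) = 1/\<xi> - of_int (cf_a \<theta> 1)"
    by (simp add: frac_def cf_a_def \<xi>_def)
  then show ?case using D0 D1 xp by (simp add: field_simps)
next
  case (Suc n)
  define x where "x = cf_rem \<theta> (Suc (Suc n))"
  have xp: "frac (cf_rem \<theta> (Suc n)) > 0" using xi_pos[OF irr] by blast
  have x: "x * frac (cf_rem \<theta> (Suc n)) = 1" using xp by (simp add: x_def)
  have fx: "frac x = x - of_int (cf_a \<theta> (n+2))" by (simp add: frac_def cf_a_def x_def)
  have "cfD \<theta> n = - x * cfD \<theta> (Suc n)"
    using Suc x by (simp add: algebra_simps)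
  then have "cfD \<theta> (Suc (Suc n)) = (of_int (cf_a \<theta> (n+2)) - x) * cfD \<theta> (Suc n)"
    using cfD_rec[of \<theta> n] by (simp add: algebra_simps)
  then have "cfD \<theta> (Suc (Suc n)) = - frac x * cfD \<theta> (Suc n)"
    by (simp add: fx)
  then show ?case by (simp add: x_def)
qed

lemma cfE: "\<bar>of_int (cf_q \<theta> (Suc n)) * cfD \<theta> n - of_int (cf_q \<theta> n) * cfD \<theta> (Suc n)\<bar> = 1"
proof (induction n)
  case 0
  then show ?case by (simp add: cfD_def algebra_simps)
next
  case (Suc n)
  have "of_int (cf_q \<theta> (Suc (Suc n))) * cfD \<theta> (Suc n) - of_int (cf_q \<theta> (Suc n)) * cfD \<theta> (Suc (Suc n))
       = - (of_int (cf_q \<theta> (Suc n)) * cfD \<theta> n - of_int (cf_q \<theta> n) * cfD \<theta> (Suc n))"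
    by (simp only: cfD_rec cf_q.simps of_int_add of_int_mult) (simp add: algebra_simps)
  then show ?case using Suc by simp
qed

lemma cfD_bound: assumes irr: "\<theta> \<notin> \<rat>"
  shows "\<bar>cfD \<theta> n\<bar> * of_int (cf_q \<theta> (Suc n)) \<le> 1"
proof -
  have "1 = \<bar>of_int (cf_q \<theta> (Suc n)) * cfD \<theta> n - of_int (cf_q \<theta> n) * cfD \<theta> (Suc n)\<bar>"
    using cfE by simp
  also have "\<dots> = \<bar>cfD \<theta> n * (of_int (cf_q \<theta> (Suc n)) + of_int (cf_q \<theta> n) * frac (cf_rem \<theta> (Suc n)))\<bar>"
    unfolding cfD_step[OF irr] by (simp only: algebra_simps)
  also have "\<dots> = \<bar>cfD \<theta> n\<bar> * (of_int (cf_q \<theta> (Suc n)) + of_int (cf_q \<theta> n) * frac (cf_rem \<theta> (Suc n)))"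
    unfolding abs_mult using cf_q_mono_aux[OF irr, of n] cf_q_mono_aux[OF irr, of "Suc n"]
      xi_pos[OF irr, of "Suc n"] by (intro arg_cong[where f="\<lambda>t. _ * t"] abs_of_nonneg) auto
  also have "\<dots> \<ge> \<bar>cfD \<theta> n\<bar> * of_int (cf_q \<theta> (Suc n))"
    using cf_q_mono_aux[OF irr, of n] xi_pos[OF irr, of "Suc n"]
    by (intro mult_left_mono) auto
  finally show ?thesis by simp
qed


lemma cf_q_ge1: "\<theta> \<notin> \<rat> \<Longrightarrow> cf_q \<theta> n \<ge> 1"
  using cf_q_mono_aux by blast

lemma cf_q_mono: assumes "\<theta> \<notin> \<rat>" "i \<le> j" shows "cf_q \<theta> i \<le> cf_q \<theta> j"
  using assms(2)
proof (induction j)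
  case 0 then show ?case by simp
next
  case (Suc j)
  show ?case
  proof (cases "i = Suc j")
    case True then show ?thesis by simp
  next
    case False then have ij: "i \<le> j" using Suc.prems by simp
    then show ?thesis using Suc.IH[OF ij] cf_q_mono_aux[OF assms(1), of j] by linarith
  qed
qed

lemma cf_q_strict: assumes "\<theta> \<notin> \<rat>" "1 \<le> i" "i < j" shows "cf_q \<theta> i < cf_q \<theta> j"
  using assms(3)
proof (induction j)
  case 0 then show ?case by simp
next
  case (Suc j)
  have "cf_q \<theta> i \<le> cf_q \<theta> j" using cf_q_mono[OF assms(1)] Suc.prems by simp
  moreover have "cf_q \<theta> j < cf_q \<theta> (Suc j)" using cf_q_mono_aux[OF assms(1), of j] Suc.prems assms(2) by simp
  ultimately show ?case by simp
qed

lemma key_gen: assumes irr: "\<theta> \<notin> \<rat>"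
  shows "cmod (1 - exp (2 * pi * \<i> * complex_of_real (of_int c * of_int (cf_q \<theta> b) * \<theta>)))
          \<le> 2 * pi * \<bar>of_int c\<bar> * (1 / of_int (cf_q \<theta> (Suc b)))"
proof -
  have "cmod (1 - exp (2 * pi * \<i> * complex_of_real (of_int c * of_int (cf_q \<theta> b) * \<theta>)))
     \<le> 2 * pi * \<bar>of_int c * of_int (cf_q \<theta> b) * \<theta> - of_int (c * cf_p \<theta> b)\<bar>"
    by (rule norm_1_minus_exp_2pi)
  also have "\<bar>of_int c * of_int (cf_q \<theta> b) * \<theta> - of_int (c * cf_p \<theta> b)\<bar> = \<bar>of_int c\<bar> * \<bar>cfD \<theta> b\<bar>"
    by (simp add: cfD_def abs_mult[symmetric] algebra_simps)
  also have "\<bar>cfD \<theta> b\<bar> \<le> 1 / of_int (cf_q \<theta> (Suc b))"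
    using cfD_bound[OF irr, of b] cf_q_ge1[OF irr, of "Suc b"] by (simp add: le_divide_eq)
  finally show ?thesis by (simp add: mult_left_mono mult.assoc)
qed

lemma key1: assumes irr: "\<theta> \<notin> \<rat>"
  shows "cmod (1 - exp (2 * pi * \<i> * of_int (cf_q \<theta> a) * of_nat (nat (cf_q \<theta> b)) * of_real \<theta>))
          \<le> 2 * pi * real (nat (cf_q \<theta> a)) * (1 / of_int (cf_q \<theta> (Suc b)))"
proof -
  have qa: "cf_q \<theta> a \<ge> 1" "cf_q \<theta> b \<ge> 1" using cf_q_ge1[OF irr] by auto
  have "2 * pi * \<i> * of_int (cf_q \<theta> a) * of_nat (nat (cf_q \<theta> b)) * of_real \<theta>
      = 2 * pi * \<i> * complex_of_real (of_int (cf_q \<theta> a) * of_int (cf_q \<theta> b) * \<theta>)"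
    using qa by simp
  then show ?thesis by (simp only:) (rule order_trans[OF key_gen[OF irr]], use qa in simp)
qed

lemma key2: assumes irr: "\<theta> \<notin> \<rat>"
  shows "cmod (1 - exp (2 * pi * \<i> * of_int (cf_q \<theta> a) * of_nat (nat (cf_q \<theta> b)) * of_real \<theta>))
          \<le> 2 * pi * real (nat (cf_q \<theta> b)) * (1 / of_int (cf_q \<theta> (Suc a)))"
proof -
  have qa: "cf_q \<theta> a \<ge> 1" "cf_q \<theta> b \<ge> 1" using cf_q_ge1[OF irr] by auto
  have "2 * pi * \<i> * of_int (cf_q \<theta> a) * of_nat (nat (cf_q \<theta> b)) * of_real \<theta>
      = 2 * pi * \<i> * complex_of_real (of_int (cf_q \<theta> b) * of_int (cf_q \<theta> a) * \<theta>)"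
    using qa by simp
  then show ?thesis by (simp only:) (rule order_trans[OF key_gen[OF irr]], use qa in simp)
qed

lemma key0: assumes irr: "\<theta> \<notin> \<rat>"
  shows "cmod (1 - exp (2 * pi * \<i> * of_nat (nat (cf_q \<theta> b)) * of_real \<theta>))
          \<le> 2 * pi * (1 / of_int (cf_q \<theta> (Suc b)))"
proof -
  have qa: "cf_q \<theta> b \<ge> 1" using cf_q_ge1[OF irr] by auto
  have "2 * pi * \<i> * of_nat (nat (cf_q \<theta> b)) * of_real \<theta>
      = 2 * pi * \<i> * complex_of_real (of_int 1 * of_int (cf_q \<theta> b) * \<theta>)"
    using qa by simp
  then show ?thesis by (simp only:) (rule order_trans[OF key_gen[OF irr]], use qa in simp)
qed

lemma nat_le_pow2: "(n::nat) \<ge> 1 \<Longrightarrow> real n \<le> 2 ^ (n - 1)"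
proof (induction n)
  case 0 then show ?case by simp
next
  case (Suc n)
  show ?case
  proof (cases "n = 0")
    case True then show ?thesis by simp
  next
    case False
    then have "real n \<le> 2 ^ (n - 1)" using Suc by simp
    moreover have "(2::real) ^ (Suc n - 1) = 2 * 2 ^ (n - 1)" using False
      by (metis Suc_pred' diff_Suc_1 not_gr0 power_Suc)
    moreover have "(1::real) \<le> 2 ^ (n - 1)" by simp
    ultimately show ?thesis unfolding of_nat_Suc by linarith
  qed
qed

lemma pow_lemma: assumes "(n::nat) \<ge> 1" "0 \<le> s" "s \<le> 1/2" shows "real n * s ^ n \<le> s"
proof -
  have "s ^ (n - 1) \<le> (1/2) ^ (n - 1)" using assms by (intro power_mono) auto
  then have "real n * s ^ (n - 1) \<le> real n * (1/2) ^ (n - 1)" by (intro mult_left_mono) auto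
  also have "\<dots> = real n / 2 ^ (n - 1)" by (simp add: power_one_over)
  also have "\<dots> \<le> 1" using nat_le_pow2[OF assms(1)] by simp
  finally have "real n * s ^ (n - 1) \<le> 1" .
  then have "s * (real n * s ^ (n - 1)) \<le> s" using assms(2) by (simp add: mult_left_le)
  moreover have "s ^ n = s * s ^ (n - 1)" using assms(1) by (cases n) auto
  ultimately show ?thesis by (metis mult.left_commute)
qed

lemma tb: assumes "c \<le> 2*pi*real B * t" "t \<le> r ^ A" "B \<le> A" "A \<ge> 1" "0 \<le> r" "real p * r \<le> 1/2" "0 \<le> t"
  shows "c * real p ^ A \<le> 2*pi * (real p * r)"
proof -
  have "c * real p ^ A \<le> (2*pi*real B * t) * real p ^ A" using assms(1) by (intro mult_right_mono) auto
  also have "\<dots> \<le> (2*pi*real A * r ^ A) * real p ^ A"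
  proof (rule mult_right_mono)
    have "2*pi*real B * t \<le> 2*pi*real B * r ^ A"
      by (rule mult_left_mono) (use assms(2) pi_gt_zero in auto)
    also have "\<dots> \<le> 2*pi*real A * r ^ A"
      by (rule mult_right_mono, rule mult_left_mono) (use assms(3,5) pi_gt_zero in auto)
    finally show "2*pi*real B * t \<le> 2*pi*real A * r ^ A" .
  qed simp
  also have "\<dots> = 2*pi*(real A * (real p * r) ^ A)" by (simp add: power_mult_distrib mult_ac)
  also have "\<dots> \<le> 2*pi*(real p * r)"
  proof (rule mult_left_mono)
    have "0 \<le> real p * r" using assms(5) by simp
    then show "real A * (real p * r) ^ A \<le> real p * r" using pow_lemma[of A "real p * r"] assms(4,6) by blast
  qed (use pi_gt_zero in simp)
  finally show ?thesis .
qed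


theorem lemma2p5:
  fixes \<theta> :: real and \<epsilon> :: "nat \<Rightarrow> real"
  assumes irr: "\<theta> \<notin> \<rat>"
    and growth: "filterlim (\<lambda>n. ln (real_of_int (cf_q \<theta> (Suc n))) / real_of_int (cf_q \<theta> n))
                   at_top sequentially"
    and eps_pos: "\<And>p. p \<ge> 1 \<Longrightarrow> \<epsilon> p > 0"
    and eps_lim: "\<epsilon> \<longlonglongrightarrow> 0"
  shows "\<exists>k :: nat \<Rightarrow> nat. \<exists>N :: nat \<Rightarrow> nat.
           strict_mono k \<and> strict_mono_on {1..} N \<and> (\<forall>p\<ge>1. N p > 0) \<and>
           (\<forall>p\<ge>1.
              summable (\<lambda>n. cmod (1 - exp (2 * pi * \<i> * of_int (cf_q \<theta> (k n)) * of_nat (N p) * of_real \<theta>))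
                              * real p ^ nat (cf_q \<theta> (k n))) \<and>
              cmod (1 - exp (2 * pi * \<i> * of_nat (N p) * of_real \<theta>))
              + (\<Sum>n. cmod (1 - exp (2 * pi * \<i> * of_int (cf_q \<theta> (k n)) * of_nat (N p) * of_real \<theta>))
                        * real p ^ nat (cf_q \<theta> (k n)))
              \<le> \<epsilon> p)"
proof -
  define e where "e m = Min (insert 1 (\<epsilon> ` {1..m}))" for m :: nat
  have e_pos: "e m > 0" for m
    unfolding e_def using eps_pos by (subst Min_gr_iff) auto
  have e_le1: "e m \<le> 1" for m unfolding e_def by (intro Min_le) auto
  have e_le: "e m \<le> \<epsilon> p" if "1 \<le> p" "p \<le> m" for m p unfolding e_def using that by (intro Min_le) auto
  define r where "r m = e m / (8*pi*(real m + 1)*2^m)" for m :: nat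
  have D1: "1 \<le> 8*pi*(real m + 1)*2^m" for m
  proof -
    have "1 * 1 * 1 \<le> 8*pi*(real m + 1)*2^m"
      using pi_gt3 by (intro mult_mono) auto
    then show ?thesis by simp
  qed
  have r_pos: "r m > 0" for m unfolding r_def using e_pos[of m] D1[of m] by simp
  have r_le1: "r m \<le> 1" for m unfolding r_def using e_le1[of m] D1[of m] by (simp add: divide_le_eq)
  have r_main: "2*pi*real m * r m \<le> e m / (4*2^m)" for m
  proof -
    have d: "8*pi*(real m+1)*2^m = (4*2^m)*(2*pi*(real m+1))" by (simp add: algebra_simps)
    have "r m = (e m/(4*2^m)) / (2*pi*(real m+1))" unfolding r_def d by (simp add: divide_divide_eq_left)
    then have "2*pi*real m * r m = (2*pi*real m / (2*pi*(real m+1))) * (e m/(4*2^m))" by simp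
    also have "\<dots> \<le> e m/(4*2^m)" using e_pos[of m] pi_gt_zero by (intro mult_left_le_one_le) auto
    finally show ?thesis .
  qed
  have r_small: "real m * r m \<le> 1/2" for m
  proof -
    have nn: "0 \<le> real m * r m" using r_pos[of m] by simp
    have "e m/(4*2^m) \<le> 1/4" using e_le1[of m] by (simp add: field_simps) (metis one_le_power order_trans one_le_numeral)
    moreover have "6 * (real m * r m) \<le> (2*pi) * (real m * r m)" using pi_gt3 nn by (intro mult_right_mono) auto
    moreover have "2*pi*real m * r m = (2*pi) * (real m * r m)" by (simp add: mult.assoc)
    ultimately show ?thesis using r_main[of m] by linarith
  qed
  have ev: "\<exists>J. \<forall>j\<ge>J. 1 / real_of_int (cf_q \<theta> (Suc j)) \<le> r m ^ nat (cf_q \<theta> j)" for m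
  proof -
    from growth have "eventually (\<lambda>j. ln (1 / r m) \<le> ln (real_of_int (cf_q \<theta> (Suc j))) / real_of_int (cf_q \<theta> j)) sequentially"
      by (simp add: filterlim_at_top)
    then obtain J where J: "\<forall>j\<ge>J. ln (1 / r m) \<le> ln (real_of_int (cf_q \<theta> (Suc j))) / real_of_int (cf_q \<theta> j)"
      by (auto simp: eventually_sequentially)
    show ?thesis
    proof (intro exI allI impI)
      fix j assume "J \<le> j"
      with J have h: "ln (1 / r m) \<le> ln (real_of_int (cf_q \<theta> (Suc j))) / real_of_int (cf_q \<theta> j)" by blast
      have q1: "cf_q \<theta> j \<ge> 1" "cf_q \<theta> (Suc j) \<ge> 1" using cf_q_ge1[OF irr] by auto
      define n where "n = nat (cf_q \<theta> j)"
      have rn: "real n = real_of_int (cf_q \<theta> j)" using q1 by (simp add: n_def)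
      have "real n * ln (1 / r m) \<le> ln (real_of_int (cf_q \<theta> (Suc j)))"
        using h q1 rn by (simp add: le_divide_eq mult.commute)
      moreover have "ln ((1 / r m) ^ n) = real n * ln (1 / r m)"
        using r_pos[of m] by (simp add: ln_realpow)
      ultimately have "ln ((1 / r m) ^ n) \<le> ln (real_of_int (cf_q \<theta> (Suc j)))" by simp
      then have "(1 / r m) ^ n \<le> real_of_int (cf_q \<theta> (Suc j))"
        using r_pos[of m] q1 by (subst (asm) ln_le_cancel_iff) auto
      then have "1 / real_of_int (cf_q \<theta> (Suc j)) \<le> 1 / (1 / r m) ^ n"
        using r_pos[of m] q1 by (intro divide_left_mono) (auto intro!: mult_pos_pos)
      then show "1 / real_of_int (cf_q \<theta> (Suc j)) \<le> r m ^ nat (cf_q \<theta> j)"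
        by (simp add: n_def power_one_over)
    qed
  qed
  then have "\<forall>m. \<exists>J. \<forall>j\<ge>J. 1 / real_of_int (cf_q \<theta> (Suc j)) \<le> r m ^ nat (cf_q \<theta> j)" by blast
  then obtain J where J: "\<And>m j. j \<ge> J m \<Longrightarrow> 1 / real_of_int (cf_q \<theta> (Suc j)) \<le> r m ^ nat (cf_q \<theta> j)"
    by metis
  define k where "k m = m + (\<Sum>i\<le>m. J i)" for m
  have kmono: "strict_mono k" unfolding strict_mono_Suc_iff by (simp add: k_def)
  have kJ: "J m \<le> k m" for m
  proof -
    have "J m \<le> (\<Sum>i\<le>m. J i)" by (rule member_le_sum) auto
    then show ?thesis by (simp add: k_def)
  qed
  have kge: "m \<le> k m" for m by (simp add: k_def)
  have P: "1 / real_of_int (cf_q \<theta> (Suc (k m))) \<le> r m ^ nat (cf_q \<theta> (k m))" for m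
    using J kJ by blast
  have kle: "k a \<le> k b" if "a \<le> b" for a b using kmono that by (simp add: strict_mono_less_eq)
  have qnat_mono: "nat (cf_q \<theta> (k a)) \<le> nat (cf_q \<theta> (k b))" if "a \<le> b" for a b
    using cf_q_mono[OF irr kle[OF that]] by simp
  have qnat_ge1: "nat (cf_q \<theta> j) \<ge> 1" for j using cf_q_ge1[OF irr, of j] by simp
  have Rpos: "0 \<le> 1 / real_of_int (cf_q \<theta> (Suc j))" for j using cf_q_ge1[OF irr, of "Suc j"] by simp
  define N where "N p = nat (cf_q \<theta> (k p))" for p
  have Nmono: "strict_mono_on {1..} N"
  proof (rule strict_mono_onI)
    fix a b :: nat assume "a \<in> {1..}" "b \<in> {1..}" "a < b"
    then have "1 \<le> k a" "k a < k b" using kge[of a] kmono by (auto simp: strict_mono_def)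
    then have "cf_q \<theta> (k a) < cf_q \<theta> (k b)" by (rule cf_q_strict[OF irr])
    then show "N a < N b" unfolding N_def using cf_q_ge1[OF irr, of "k a"] by simp
  qed
  have Npos: "\<forall>p\<ge>1. N p > 0" unfolding N_def using qnat_ge1 by (simp add: Suc_le_eq)
  have main: "summable (\<lambda>n. cmod (1 - exp (2 * pi * \<i> * of_int (cf_q \<theta> (k n)) * of_nat (N p) * of_real \<theta>))
                              * real p ^ nat (cf_q \<theta> (k n))) \<and>
              cmod (1 - exp (2 * pi * \<i> * of_nat (N p) * of_real \<theta>))
              + (\<Sum>n. cmod (1 - exp (2 * pi * \<i> * of_int (cf_q \<theta> (k n)) * of_nat (N p) * of_real \<theta>))
                        * real p ^ nat (cf_q \<theta> (k n)))
              \<le> \<epsilon> p" if p1: "p \<ge> 1" for p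
  proof -
    define T where "T n = cmod (1 - exp (2 * pi * \<i> * of_int (cf_q \<theta> (k n)) * of_nat (N p) * of_real \<theta>))
                              * real p ^ nat (cf_q \<theta> (k n))" for n
    have epp: "\<epsilon> p > 0" using eps_pos p1 by simp
    have ep: "e p / (4 * 2^p) \<le> \<epsilon> p / 4 * (1/2)^p"
      using e_le[OF p1 order.refl] by (simp add: field_simps power_one_over)
    have T_bd: "T n \<le> \<epsilon> p / 4 * (1/2)^n" for n
    proof (cases "n < p")
      case True
      have c: "cmod (1 - exp (2 * pi * \<i> * of_int (cf_q \<theta> (k n)) * of_nat (N p) * of_real \<theta>))
          \<le> 2 * pi * real (nat (cf_q \<theta> (k n))) * (1 / of_int (cf_q \<theta> (Suc (k p))))"
        unfolding N_def by (rule key1[OF irr])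
      have t: "1 / of_int (cf_q \<theta> (Suc (k p))) \<le> r p ^ nat (cf_q \<theta> (k n))"
        using P[of p] power_decreasing[OF qnat_mono[of n p], of "r p"] True r_pos[of p] r_le1[of p]
        by simp
      have "T n \<le> 2*pi*(real p * r p)" unfolding T_def
        by (rule tb[OF c t order.refl qnat_ge1 less_imp_le[OF r_pos]])
           (use r_small[of p] kge[of p] Rpos in auto)
      also have "\<dots> \<le> e p / (4 * 2^p)" using r_main[of p] by (simp add: mult.assoc)
      also have "\<dots> \<le> \<epsilon> p / 4 * (1/2)^p" by (rule ep)
      also have "\<dots> \<le> \<epsilon> p / 4 * (1/2)^n" using epp True
        by (intro mult_left_mono power_decreasing) auto
      finally show ?thesis .
    next
      case False
      then have np: "p \<le> n" by simp
      have c: "cmod (1 - exp (2 * pi * \<i> * of_int (cf_q \<theta> (k n)) * of_nat (N p) * of_real \<theta>))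
          \<le> 2 * pi * real (nat (cf_q \<theta> (k p))) * (1 / of_int (cf_q \<theta> (Suc (k n))))"
        unfolding N_def by (rule key2[OF irr])
      have pr: "real p * r n \<le> 1/2"
        using r_small[of n] np r_pos[of n] by (meson less_imp_le mult_right_mono of_nat_le_iff order_trans)
      have "T n \<le> 2*pi*(real p * r n)" unfolding T_def
        by (rule tb[OF c P[of n] qnat_mono[OF np] qnat_ge1 less_imp_le[OF r_pos] pr Rpos])
      also have "\<dots> \<le> 2*pi*(real n * r n)"
        using np r_pos[of n] by (intro mult_left_mono mult_right_mono) auto
      also have "\<dots> \<le> e n / (4 * 2^n)" using r_main[of n] by (simp add: mult.assoc)
      also have "\<dots> \<le> \<epsilon> p / (4 * 2^n)" using e_le[OF p1 np] by (intro divide_right_mono) auto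
      also have "\<dots> = \<epsilon> p / 4 * (1/2)^n" by (simp add: field_simps power_one_over)
      finally show ?thesis .
    qed
    have T_nn: "0 \<le> T n" for n unfolding T_def by simp
    have geo: "summable (\<lambda>n. \<epsilon> p / 4 * (1/2::real)^n)"
      by (intro summable_mult summable_geometric) simp
    have sT: "summable T"
      by (rule summable_comparison_test'[OF geo, of 0]) (use T_bd T_nn in auto)
    have "suminf T \<le> (\<Sum>n. \<epsilon> p / 4 * (1/2::real)^n)"
      by (rule suminf_le[OF T_bd sT geo])
    also have "\<dots> = \<epsilon> p / 4 * 2"
      by (subst suminf_mult[OF summable_geometric]) (auto simp: suminf_geometric)
    finally have sum_bd: "suminf T \<le> \<epsilon> p / 2" by simp
    have c0: "cmod (1 - exp (2 * pi * \<i> * of_nat (N p) * of_real \<theta>))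
        \<le> 2 * pi * (1 / of_int (cf_q \<theta> (Suc (k p))))"
      unfolding N_def by (rule key0[OF irr])
    also have "\<dots> \<le> 2 * pi * r p"
    proof -
      have "r p ^ nat (cf_q \<theta> (k p)) \<le> r p ^ 1"
        using qnat_ge1[of "k p"] r_pos[of p] r_le1[of p] by (intro power_decreasing) auto
      then show ?thesis using P[of p] by (intro mult_left_mono) auto
    qed
    also have "\<dots> \<le> 2 * pi * (real p * r p)"
      using p1 r_pos[of p] by (intro mult_left_mono) (auto simp: mult_le_cancel_right1)
    also have "\<dots> \<le> e p / (4 * 2^p)" using r_main[of p] by (simp add: mult.assoc)
    also have "\<dots> \<le> \<epsilon> p / 4 * (1/2)^p" by (rule ep)
    also have "\<dots> \<le> \<epsilon> p / 4" using epp by (intro mult_left_le) (auto simp: power_le_one)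
    finally have t0: "cmod (1 - exp (2 * pi * \<i> * of_nat (N p) * of_real \<theta>)) \<le> \<epsilon> p / 4" .
    have "summable T \<and> cmod (1 - exp (2 * pi * \<i> * of_nat (N p) * of_real \<theta>)) + suminf T \<le> \<epsilon> p"
      using sT t0 sum_bd epp by linarith
    then show ?thesis unfolding T_def .
  qed
  show ?thesis
    apply (rule exI[of _ k], rule exI[of _ N])
    apply (rule conjI, rule kmono)
    apply (rule conjI, rule Nmono)
    apply (rule conjI, rule Npos)
    apply (intro allI impI)
    apply (erule main)
    done
qed

end
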